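(* Let $G=(X,\Sigma,\longrightarrow,X_0)$ and $R=(Z,\Sigma,\longrightarrow,Z_0)$ be automata, with $\Sigma=\Sigma_{uc}\cup\Sigma_c$ (disjoint) and required events $\Sigma_r\subseteq\Sigma$. There exists a $\Sigma_{uc}$-admissible (w.r.t. $G$) supervisor $S$ such that $S\|G\sqsubseteq_{cc}R$ if and only if there exists a $\Sigma_{ucr}$-controllability set from $G$ to $R$.
   Context: An automaton is a 4-tuple $A=(Q,\Sigma,\longrightarrow,Q_0)$ where $Q$ is a set of states, $\Sigma$ a finite set of events, ${\longrightarrow}\subseteq Q\times\Sigma\times Q$, and $\emptyset\neq Q_0\subseteq Q$ is the set of initial states. Write $q\xrightarrow{\sigma}q'$ for $(q,\sigma,q')\in{\longrightarrow}$ and $q\xrightarrow{\sigma}$ if $q\xrightarrow{\sigma}q'$ for some $q'$; the relation extends to strings $s\in\Sigma^*$ as usual. A state $q$ is reachable if $q_0\xrightarrow{s}q$ for some $q_0\in Q_0$, $s\in\Sigma^*$. A supervisor is an automaton $S=(Y,\Sigma,\longrightarrow,Y_0)$. The events are partitioned into uncontrollable events $\Sigma_{uc}$ and controllable events $\Sigma_c$, and $\Sigma_r\subseteq\Sigma$ is a fixed set of required events. The synchronous composition is $S\|G=(Y\times X,\Sigma,\longrightarrow,Y_0\times X_0)$ with $(y,x)\xrightarrow{\sigma}(y',x')$ iff $y\xrightarrow{\sigma}y'$ and $x\xrightarrow{\sigma}x'$. $S$ is $\Sigma_{uc}$-admissible w.r.t. $G$ if for every reachable state $(y,x)$ of $S\|G$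 and every $\sigma\in\Sigma_{uc}$, $x\xrightarrow{\sigma}$ implies $(y,x)\xrightarrow{\sigma}$. For automata $A_1=(Q_1,\Sigma,\longrightarrow,Q_{01})$, $A_2=(Q_2,\Sigma,\longrightarrow,Q_{02})$, a relation $\Phi\subseteq Q_1\times Q_2$ is a cc-simulation if: (initial state) every $q_0\in Q_{01}$ has some $p_0\in Q_{02}$ with $(q_0,p_0)\in\Phi$; (forward) for all $(q,p)\in\Phi$, $\sigma\in\Sigma$ and $q\xrightarrow{\sigma}q'$ there is $p'$ with $p\xrightarrow{\sigma}p'$ and $(q',p')\in\Phi$; ($\Sigma_r$-backward) for all $(q,p)\in\Phi$, $\sigma\in\Sigma_r$ and $p\xrightarrow{\sigma}p'$ there is $q'$ with $q\xrightarrow{\sigma}q'$ and $(q',p')\in\Phi$. $A_1\sqsubseteq_{cc}A_2$ means such a $\Phi$ exists. For $W,W'\subseteq X\times Z$ and $\sigma\in\Sigma$, $\mathit{match}_{G,R}(W,\sigma,W')$ holds iff for all $(x,z)\in W$ and all $x'$ with $x\xrightarrow{\sigma}x'$ there exists $z'$ with $z\xrightarrow{\sigma}z'$ and $(x',z')\in W'$. A set $E\subseteq\wp(X\times Z)$ is a $\Sigma_{ucr}$-controllability set from $G$ to $R$ if: (istate) there is $W_0\in E$ such that every $x_0\in X_0$ has some $z_0\in Z_0$ with $(x_0,z_0)\in W_0$; (a) for every $W\in E$ and $\sigma\in\Sigma_{uc}$ there is $W'\in E$ with $\mathit{match}_{G,R}(W,\sigma,W')$; (b) for every $W\in E$, $(x,z)\in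 W$, $\sigma\in\Sigma_r$ and $z'\in Z$ with $z\xrightarrow{\sigma}z'$, there exist $x'\in X$ and $W'\in E$ with $x\xrightarrow{\sigma}x'$, $(x',z')\in W'$ and $\mathit{match}_{G,R}(W,\sigma,W')$. *)

theory Defs
  imports Main
begin

text \<open>An automaton over state type 'q and event type 'e: the state set is UNIV::'q set,
  the event set is UNIV::'e set; we store the transition relation and the initial states.\<close>
type_synonym ('q, 'e) automaton = "('q \<times> 'e \<times> 'q) set \<times> 'q set"

definition trans :: "('q, 'e) automaton \<Rightarrow> ('q \<times> 'e \<times> 'q) set" where
  "trans A = fst A"

definition init :: "('q, 'e) automaton \<Rightarrow> 'q set" where
  "init A = snd A"

definition is_automaton :: "('q, 'e) automaton \<Rightarrow> bool" where
  "is_automaton A \<longleftrightarrow> init A \<noteq> {}"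

inductive steps :: "('q, 'e) automaton \<Rightarrow> 'q \<Rightarrow> 'e list \<Rightarrow> 'q \<Rightarrow> bool" for A where
  steps_nil: "steps A q [] q"
| steps_cons: "(q, \<sigma>, q') \<in> trans A \<Longrightarrow> steps A q' s q'' \<Longrightarrow> steps A q (\<sigma> # s) q''"

definition reachable :: "('q, 'e) automaton \<Rightarrow> 'q \<Rightarrow> bool" where
  "reachable A q \<longleftrightarrow> (\<exists>q0 \<in> init A. \<exists>s. steps A q0 s q)"

definition sync :: "('y, 'e) automaton \<Rightarrow> ('x, 'e) automaton \<Rightarrow> ('y \<times> 'x, 'e) automaton" where
  "sync S G = ({((y, x), \<sigma>, (y', x')) | y x \<sigma> y' x'.
                  (y, \<sigma>, y') \<in> trans S \<and> (x, \<sigma>, x') \<in> trans G},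
               init S \<times> init G)"

definition admissible :: "'e set \<Rightarrow> ('x, 'e) automaton \<Rightarrow> ('y, 'e) automaton \<Rightarrow> bool" where
  "admissible Sigma_uc G S \<longleftrightarrow>
     (\<forall>y x. reachable (sync S G) (y, x) \<longrightarrow>
        (\<forall>\<sigma> \<in> Sigma_uc. (\<exists>x'. (x, \<sigma>, x') \<in> trans G) \<longrightarrow>
                    (\<exists>q'. ((y, x), \<sigma>, q') \<in> trans (sync S G))))"

definition cc_simulation :: "'e set \<Rightarrow> ('q, 'e) automaton \<Rightarrow> ('p, 'e) automaton \<Rightarrow> ('q \<times> 'p) set \<Rightarrow> bool" where
  "cc_simulation Sigma_r A1 A2 \<Phi> \<longleftrightarrow>
     (\<forall>q0 \<in> init A1. \<exists>p0 \<in> init A2. (q0, p0) \<in> \<Phi>) \<and>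
     (\<forall>q p \<sigma> q'. (q, p) \<in> \<Phi> \<longrightarrow> (q, \<sigma>, q') \<in> trans A1 \<longrightarrow>
                  (\<exists>p'. (p, \<sigma>, p') \<in> trans A2 \<and> (q', p') \<in> \<Phi>)) \<and>
     (\<forall>q p \<sigma> p'. (q, p) \<in> \<Phi> \<longrightarrow> \<sigma> \<in> Sigma_r \<longrightarrow> (p, \<sigma>, p') \<in> trans A2 \<longrightarrow>
                  (\<exists>q'. (q, \<sigma>, q') \<in> trans A1 \<and> (q', p') \<in> \<Phi>))"

definition cc_le :: "'e set \<Rightarrow> ('q, 'e) automaton \<Rightarrow> ('p, 'e) automaton \<Rightarrow> bool" where
  "cc_le Sigma_r A1 A2 \<longleftrightarrow> (\<exists>\<Phi>. cc_simulation Sigma_r A1 A2 \<Phi>)"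

definition match :: "('x, 'e) automaton \<Rightarrow> ('z, 'e) automaton \<Rightarrow> ('x \<times> 'z) set \<Rightarrow> 'e \<Rightarrow> ('x \<times> 'z) set \<Rightarrow> bool" where
  "match G R W \<sigma> W' \<longleftrightarrow>
     (\<forall>(x, z) \<in> W. \<forall>x'. (x, \<sigma>, x') \<in> trans G \<longrightarrow>
        (\<exists>z'. (z, \<sigma>, z') \<in> trans R \<and> (x', z') \<in> W'))"

definition controllability_set ::
  "'e set \<Rightarrow> 'e set \<Rightarrow> ('x, 'e) automaton \<Rightarrow> ('z, 'e) automaton \<Rightarrow> ('x \<times> 'z) set set \<Rightarrow> bool" where
  "controllability_set Sigma_uc Sigma_r G R E \<longleftrightarrow>
     (\<exists>W0 \<in> E. \<forall>x0 \<in> init G. \<exists>z0 \<in> init R. (x0, z0) \<in> W0) \<and>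
     (\<forall>W \<in> E. \<forall>\<sigma> \<in> Sigma_uc. \<exists>W' \<in> E. match G R W \<sigma> W') \<and>
     (\<forall>W \<in> E. \<forall>(x, z) \<in> W. \<forall>\<sigma> \<in> Sigma_r. \<forall>z'. (z, \<sigma>, z') \<in> trans R \<longrightarrow>
        (\<exists>x'. \<exists>W' \<in> E. (x, \<sigma>, x') \<in> trans G \<and> (x', z') \<in> W' \<and> match G R W \<sigma> W'))"

end

theory Submission
  imports Defs
begin

lemma sync_trans: "(((y, x), \<sigma>, (y', x')) \<in> trans (sync S G)) \<longleftrightarrow>
   ((y, \<sigma>, y') \<in> trans S \<and> (x, \<sigma>, x') \<in> trans G)"
  by (simp add: sync_def trans_def)

lemma sync_init: "init (sync S G) = init S \<times> init G"
  by (simp add: sync_def init_def)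

lemma reach_init: "q \<in> init A \<Longrightarrow> reachable A q"
  unfolding reachable_def by (meson steps.steps_nil)

lemma steps_snoc: "steps A q s q' \<Longrightarrow> (q', \<sigma>, q'') \<in> trans A \<Longrightarrow> steps A q (s @ [\<sigma>]) q''"
  by (induction rule: steps.induct) (auto intro: steps.intros)

lemma reach_step: "reachable A q \<Longrightarrow> (q, \<sigma>, q') \<in> trans A \<Longrightarrow> reachable A q'"
  unfolding reachable_def by (meson steps_snoc)

lemma dir1:
  fixes S :: "('y, 'e) automaton"
  assumes "is_automaton S" "admissible Sigma_uc G S" "cc_le Sigma_r (sync S G) R"
  shows "\<exists>E. controllability_set Sigma_uc Sigma_r G R E"
proof -
  obtain \<Phi> where P: "cc_simulation Sigma_r (sync S G) R \<Phi>" using assms(3) cc_le_def by blast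
  have Pi: "\<And>q0. q0 \<in> init (sync S G) \<Longrightarrow> \<exists>p0 \<in> init R. (q0, p0) \<in> \<Phi>"
    and Pf: "\<And>q p \<sigma> q'. (q, p) \<in> \<Phi> \<Longrightarrow> (q, \<sigma>, q') \<in> trans (sync S G) \<Longrightarrow>
                  (\<exists>p'. (p, \<sigma>, p') \<in> trans R \<and> (q', p') \<in> \<Phi>)"
    and Pb: "\<And>q p \<sigma> p'. (q, p) \<in> \<Phi> \<Longrightarrow> \<sigma> \<in> Sigma_r \<Longrightarrow> (p, \<sigma>, p') \<in> trans R \<Longrightarrow>
                  (\<exists>q'. (q, \<sigma>, q') \<in> trans (sync S G) \<and> (q', p') \<in> \<Phi>)"
    using P unfolding cc_simulation_def by blast+
  define W where "W y = {(x, z). reachable (sync S G) (y, x) \<and> ((y, x), z) \<in> \<Phi>}" for y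
  have M: "match G R (W y) \<sigma> (W y')" if "(y, \<sigma>, y') \<in> trans S" for y \<sigma> y'
    unfolding match_def
  proof (intro ballI allI impI, clarify)
    fix x z x'
    assume "(x, z) \<in> W y" "(x, \<sigma>, x') \<in> trans G"
    then have r: "reachable (sync S G) (y, x)" "((y, x), z) \<in> \<Phi>"
      and t: "((y, x), \<sigma>, (y', x')) \<in> trans (sync S G)"
      using that by (auto simp: W_def sync_trans)
    obtain z' where "(z, \<sigma>, z') \<in> trans R" "((y', x'), z') \<in> \<Phi>" using Pf[OF r(2) t] by blast
    then show "\<exists>z'. (z, \<sigma>, z') \<in> trans R \<and> (x', z') \<in> W y'"
      using reach_step[OF r(1) t] by (auto simp: W_def)
  qed
  have "controllability_set Sigma_uc Sigma_r G R (range W)"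
    unfolding controllability_set_def
  proof (intro conjI)
    obtain y0 where y0: "y0 \<in> init S" using assms(1) unfolding is_automaton_def by blast
    show "\<exists>W0\<in>range W. \<forall>x0\<in>init G. \<exists>z0\<in>init R. (x0, z0) \<in> W0"
    proof -
      have "\<forall>x0\<in>init G. \<exists>z0\<in>init R. (x0, z0) \<in> W y0"
      proof
        fix x0 assume "x0 \<in> init G"
        then have h: "(y0, x0) \<in> init (sync S G)" using y0 by (simp add: sync_init)
        obtain z0 where "z0 \<in> init R" "((y0, x0), z0) \<in> \<Phi>" using Pi[OF h] by blast
        moreover have "reachable (sync S G) (y0, x0)" using reach_init[OF h] .
        ultimately show "\<exists>z0\<in>init R. (x0, z0) \<in> W y0" unfolding W_def by blast
      qed
      then show ?thesis by blast
    qed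
    show "\<forall>Wa\<in>range W. \<forall>\<sigma>\<in>Sigma_uc. \<exists>W'\<in>range W. match G R Wa \<sigma> W'"
    proof (intro ballI)
      fix Wa \<sigma> assume "Wa \<in> range W" "\<sigma> \<in> Sigma_uc"
      then obtain y where y: "Wa = W y" by blast
      show "\<exists>W'\<in>range W. match G R Wa \<sigma> W'"
      proof (cases "\<exists>y'. (y, \<sigma>, y') \<in> trans S")
        case True
        then obtain y' where "(y, \<sigma>, y') \<in> trans S" by blast
        then show ?thesis using M y by blast
      next
        case False
        have "match G R Wa \<sigma> Wa"
          unfolding match_def
        proof (intro ballI allI impI, clarify)
          fix x z x' assume a: "(x, z) \<in> Wa" "(x, \<sigma>, x') \<in> trans G"
          then have "reachable (sync S G) (y, x)" using y by (auto simp: W_def)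
          then obtain q' where "((y, x), \<sigma>, q') \<in> trans (sync S G)"
            using assms(2) a(2) \<open>\<sigma> \<in> Sigma_uc\<close> unfolding admissible_def by blast
          then show "\<exists>z'. (z, \<sigma>, z') \<in> trans R \<and> (x', z') \<in> Wa"
            using False by (cases q') (auto simp: sync_trans)
        qed
        then show ?thesis using y by blast
      qed
    qed
    show "\<forall>Wa\<in>range W. \<forall>(x, z)\<in>Wa. \<forall>\<sigma>\<in>Sigma_r. \<forall>z'. (z, \<sigma>, z') \<in> trans R \<longrightarrow>
        (\<exists>x'. \<exists>W'\<in>range W. (x, \<sigma>, x') \<in> trans G \<and> (x', z') \<in> W' \<and> match G R Wa \<sigma> W')"
    proof (intro ballI allI impI, clarify)
      fix y x z \<sigma> z'
      assume a: "(x, z) \<in> W y" "\<sigma> \<in> Sigma_r" "(z, \<sigma>, z') \<in> trans R"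
      then have r: "reachable (sync S G) (y, x)" "((y, x), z) \<in> \<Phi>" by (auto simp: W_def)
      obtain q' where q: "((y, x), \<sigma>, q') \<in> trans (sync S G)" "(q', z') \<in> \<Phi>"
        using Pb[OF r(2) a(2) a(3)] by blast
      obtain y' x' where q': "q' = (y', x')" by (cases q')
      have t: "(y, \<sigma>, y') \<in> trans S" "(x, \<sigma>, x') \<in> trans G" using q q' by (auto simp: sync_trans)
      have "(x', z') \<in> W y'" using q q' reach_step[OF r(1)] by (auto simp: W_def)
      then show "\<exists>x'. \<exists>W'\<in>range W. (x, \<sigma>, x') \<in> trans G \<and> (x', z') \<in> W' \<and> match G R (W y) \<sigma> W'"
        using t M[OF t(1)] by blast
    qed
  qed
  then show ?thesis by blast
qed

lemma dir2:
  fixes G :: "('x, 'e) automaton" and R :: "('z, 'e) automaton"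
  assumes "controllability_set Sigma_uc Sigma_r G R E"
  shows "\<exists>S :: (('x \<times> 'z) set, 'e) automaton.
             is_automaton S \<and> admissible Sigma_uc G S \<and> cc_le Sigma_r (sync S G) R"
proof -
  obtain W0 where W0: "W0 \<in> E" "\<forall>x0 \<in> init G. \<exists>z0 \<in> init R. (x0, z0) \<in> W0"
    using assms unfolding controllability_set_def by blast
  have A: "\<And>W \<sigma>. W \<in> E \<Longrightarrow> \<sigma> \<in> Sigma_uc \<Longrightarrow> \<exists>W' \<in> E. match G R W \<sigma> W'"
    using assms unfolding controllability_set_def by blast
  have B: "\<And>W x z \<sigma> z'. W \<in> E \<Longrightarrow> (x, z) \<in> W \<Longrightarrow> \<sigma> \<in> Sigma_r \<Longrightarrow> (z, \<sigma>, z') \<in> trans R \<Longrightarrow>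
        (\<exists>x'. \<exists>W' \<in> E. (x, \<sigma>, x') \<in> trans G \<and> (x', z') \<in> W' \<and> match G R W \<sigma> W')"
    using assms unfolding controllability_set_def by blast
  define S :: "(('x \<times> 'z) set, 'e) automaton" where
    "S = ({(W, \<sigma>, W') | W \<sigma> W'. W' \<in> E \<and> (W \<in> E \<longrightarrow> match G R W \<sigma> W')}, {W0})"
  have ST: "(W, \<sigma>, W') \<in> trans S \<longleftrightarrow> W' \<in> E \<and> (W \<in> E \<longrightarrow> match G R W \<sigma> W')" for W \<sigma> W'
    by (simp add: S_def trans_def)
  have SI: "init S = {W0}" by (simp add: S_def init_def)
  have "is_automaton S" using SI unfolding is_automaton_def by auto
  moreover have "admissible Sigma_uc G S"
    unfolding admissible_def
  proof (intro allI impI ballI)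
    fix W x \<sigma> assume "\<sigma> \<in> Sigma_uc" "\<exists>x'. (x, \<sigma>, x') \<in> trans G"
    then obtain x' where x': "(x, \<sigma>, x') \<in> trans G" by blast
    obtain W' where "(W, \<sigma>, W') \<in> trans S"
    proof (cases "W \<in> E")
      case True
      then show ?thesis using A[OF True \<open>\<sigma> \<in> Sigma_uc\<close>] ST that by blast
    next
      case False
      then show ?thesis using W0(1) ST that by blast
    qed
    then show "\<exists>q'. ((W, x), \<sigma>, q') \<in> trans (sync S G)"
      using x' by (auto simp: sync_trans)
  qed
  moreover have "cc_simulation Sigma_r (sync S G) R {((W, x), z). W \<in> E \<and> (x, z) \<in> W}"
    unfolding cc_simulation_def
  proof (intro conjI allI impI ballI)
    fix q0 assume "q0 \<in> init (sync S G)"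
    then show "\<exists>p0\<in>init R. (q0, p0) \<in> {((W, x), z). W \<in> E \<and> (x, z) \<in> W}"
      using W0 SI by (auto simp: sync_init)
  next
    fix q p \<sigma> q'
    assume a: "(q, p) \<in> {((W, x), z). W \<in> E \<and> (x, z) \<in> W}" "(q, \<sigma>, q') \<in> trans (sync S G)"
    obtain W x where q: "q = (W, x)" by (cases q)
    obtain W' x' where q': "q' = (W', x')" by (cases q')
    have "W \<in> E" "(x, p) \<in> W" using a q by auto
    moreover have "W' \<in> E" "match G R W \<sigma> W'" "(x, \<sigma>, x') \<in> trans G"
      using a(2) q q' \<open>W \<in> E\<close> by (auto simp: ST sync_trans)
    ultimately show "\<exists>p'. (p, \<sigma>, p') \<in> trans R \<and> (q', p') \<in> {((W, x), z). W \<in> E \<and> (x, z) \<in> W}"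
      using q' unfolding match_def by fastforce
  next
    fix q p \<sigma> p'
    assume a: "(q, p) \<in> {((W, x), z). W \<in> E \<and> (x, z) \<in> W}" "\<sigma> \<in> Sigma_r" "(p, \<sigma>, p') \<in> trans R"
    obtain W x where q: "q = (W, x)" by (cases q)
    have "W \<in> E" "(x, p) \<in> W" using a q by auto
    then obtain x' W' where "W' \<in> E" "(x, \<sigma>, x') \<in> trans G" "(x', p') \<in> W'" "match G R W \<sigma> W'"
      using B a by blast
    then show "\<exists>q'. (q, \<sigma>, q') \<in> trans (sync S G) \<and> (q', p') \<in> {((W, x), z). W \<in> E \<and> (x, z) \<in> W}"
      using q \<open>W \<in> E\<close> by (auto simp: ST sync_trans)
  qed
  ultimately have "is_automaton S \<and> admissible Sigma_uc G S \<and> cc_le Sigma_r (sync S G) R"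
    unfolding cc_le_def by (intro conjI exI)
  then show ?thesis by (rule exI)
qed

theorem theorem1:
  fixes G :: "('x, 'e :: finite) automaton"
    and R :: "('z, 'e) automaton"
    and Sigma_uc Sigma_c Sigma_r :: "'e set"
  assumes "is_automaton G" and "is_automaton R"
    and "Sigma_uc \<inter> Sigma_c = {}" and "Sigma_uc \<union> Sigma_c = UNIV"
  shows "((\<exists>S :: ('y, 'e) automaton.
             is_automaton S \<and> admissible Sigma_uc G S \<and> cc_le Sigma_r (sync S G) R)
           \<longrightarrow> (\<exists>E. controllability_set Sigma_uc Sigma_r G R E))
       \<and> ((\<exists>S :: (('x \<times> 'z) set, 'e) automaton.
             is_automaton S \<and> admissible Sigma_uc G S \<and> cc_le Sigma_r (sync S G) R)
           \<longleftrightarrow> (\<exists>E. controllability_set Sigma_uc Sigma_r G R E))"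
proof (intro conjI impI iffI)
  assume "\<exists>S :: ('y, 'e) automaton.
             is_automaton S \<and> admissible Sigma_uc G S \<and> cc_le Sigma_r (sync S G) R"
  then show "\<exists>E. controllability_set Sigma_uc Sigma_r G R E" using dir1 by blast
next
  assume "\<exists>S :: (('x \<times> 'z) set, 'e) automaton.
             is_automaton S \<and> admissible Sigma_uc G S \<and> cc_le Sigma_r (sync S G) R"
  then show "\<exists>E. controllability_set Sigma_uc Sigma_r G R E" using dir1 by blast
next
  assume "\<exists>E. controllability_set Sigma_uc Sigma_r G R E"
  then show "\<exists>S :: (('x \<times> 'z) set, 'e) automaton.
             is_automaton S \<and> admissible Sigma_uc G S \<and> cc_le Sigma_r (sync S G) R"
    using dir2 by blast
qed

end
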